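(* Let $\Lambda:\mathrm{Lip}_C^\sigma(\tilde\Omega)\times\tilde\Omega\to\mathbb{R}^{d'}$ be a causal identifiable in-context map. Then (i) for all $(\mu,x,t)\in\mathrm{Lip}_C^\sigma(\tilde\Omega)\times\tilde\Omega$, $\Lambda(\mu,x,t)=\bar\Lambda(\mu_t,x)$; (ii) if moreover $\Lambda$ is continuous (weak$^*$ $\times$ Euclidean), then the map $\mathcal{X}_C^\sigma\ni(\nu,x)\mapsto\bar\Lambda(\nu,x)$ is continuous for the product of the weak$^*$ and Euclidean topologies.
   Context: $\Omega\subset\mathbb{R}^d$ compact, $\tilde\Omega=\Omega\times[0,1]$, $C>0$, $\sigma\in(0,1)$, $\bar\mu$ the time marginal of $\mu$. $\mathrm{Lip}_C^\sigma(\tilde\Omega)$: all $\mu\in\mathcal{P}(\tilde\Omega)$ with $\bar\mu(\{0\})\ge\sigma$ admitting a disintegration $d\mu(x,s)=d\mu(x|s)d\bar\mu(s)$ with $W_2(\mu(\cdot|s),\mu(\cdot|t))\le C|s-t|$ for all $s,t$. Masked measure: $\mu_t=\frac{1_{[0,t]}}{\bar\mu([0,t])}\cdot\mu$, $t\in[0,1]$. Causal: $\Lambda(\mu,x,t)=\Lambda(\mu_t,x,t)$. Identifiable: $\mu_t=\mu_{t'}$ implies $\Lambda(\mu_t,\cdot,t)=\Lambda(\mu_{t'},\cdot,t')$. Reduced map: $\bar\Lambda(\mu,x)=\Lambda(\mu,x,e(\bar\mu))$ where $e(\bar\mu)=\max\operatorname{supp}(\bar\mu)$. $\mathcal{X}_C^\sigma=\{(\mu_t,x):\mu\in\mathrm{Lip}_C^\sigma(\tilde\Omega),x\in\Omega,t\in[0,1]\}$.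 *)

theory Defs
  imports "HOL-Probability.Probability"
begin

text \<open>Probability measures on the Borel sets of 'a \<times> real concentrated on
  \<Omega> \<times> [0,1], i.e. elements of P(\<Omega>~).\<close>
definition Pm :: "'a::euclidean_space set \<Rightarrow> ('a \<times> real) measure set" where
  "Pm \<Omega> = {\<mu>. prob_space \<mu> \<and> sets \<mu> = sets borel \<and> emeasure \<mu> (\<Omega> \<times> {0..1}) = 1}"

definition tmarg :: "('a::euclidean_space \<times> real) measure \<Rightarrow> real measure" where
  "tmarg \<mu> = distr \<mu> borel snd"

definition couplings :: "'a::euclidean_space measure \<Rightarrow> 'a measure \<Rightarrow> ('a \<times> 'a) measure set" where
  "couplings \<alpha> \<beta> = {\<pi>. prob_space \<pi> \<and> sets \<pi> = sets borel \<and>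
      distr \<pi> borel fst = \<alpha> \<and> distr \<pi> borel snd = \<beta>}"

definition W2 :: "'a::euclidean_space measure \<Rightarrow> 'a measure \<Rightarrow> real" where
  "W2 \<alpha> \<beta> = sqrt (enn2real (INF \<pi>\<in>couplings \<alpha> \<beta>.
       \<integral>\<^sup>+ z. ennreal ((norm (fst z - snd z))\<^sup>2) \<partial>\<pi>))"

definition Lip :: "real \<Rightarrow> real \<Rightarrow> 'a::euclidean_space set \<Rightarrow> ('a \<times> real) measure set" where
  "Lip C \<sigma> \<Omega> = {\<mu> \<in> Pm \<Omega>. measure (tmarg \<mu>) {0} \<ge> \<sigma> \<and>
     (\<exists>K :: real \<Rightarrow> 'a measure.
        K \<in> measurable borel (subprob_algebra borel) \<and>
        (\<forall>s. prob_space (K s) \<and> sets (K s) = sets borel \<and> emeasure (K s) \<Omega> = 1) \<and>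
        (\<forall>A \<in> sets (borel :: ('a \<times> real) measure).
           emeasure \<mu> A = (\<integral>\<^sup>+ s. emeasure (K s) {x. (x, s) \<in> A} \<partial>tmarg \<mu>)) \<and>
        (\<forall>s\<in>{0..1}. \<forall>t\<in>{0..1}. W2 (K s) (K t) \<le> C * \<bar>s - t\<bar>))}"

definition mask :: "('a::euclidean_space \<times> real) measure \<Rightarrow> real \<Rightarrow> ('a \<times> real) measure" where
  "mask \<mu> t = density \<mu> (\<lambda>z. indicator (UNIV \<times> {0..t}) z / emeasure \<mu> (UNIV \<times> {0..t}))"

definition msupp :: "real measure \<Rightarrow> real set" where
  "msupp \<nu> = {s. \<forall>\<epsilon>>0. emeasure \<nu> (ball s \<epsilon>) > 0}"

definition e_end :: "real measure \<Rightarrow> real" where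
  "e_end \<nu> = Sup (msupp \<nu>)"

definition causal :: "real \<Rightarrow> real \<Rightarrow> 'a::euclidean_space set \<Rightarrow>
    (('a \<times> real) measure \<Rightarrow> 'a \<Rightarrow> real \<Rightarrow> 'b) \<Rightarrow> bool" where
  "causal C \<sigma> \<Omega> \<Lambda> \<longleftrightarrow> (\<forall>\<mu>\<in>Lip C \<sigma> \<Omega>. \<forall>x\<in>\<Omega>. \<forall>t\<in>{0..1}. \<Lambda> \<mu> x t = \<Lambda> (mask \<mu> t) x t)"

definition identifiable :: "real \<Rightarrow> real \<Rightarrow> 'a::euclidean_space set \<Rightarrow>
    (('a \<times> real) measure \<Rightarrow> 'a \<Rightarrow> real \<Rightarrow> 'b) \<Rightarrow> bool" where
  "identifiable C \<sigma> \<Omega> \<Lambda> \<longleftrightarrow> (\<forall>\<mu>\<in>Lip C \<sigma> \<Omega>. \<forall>t\<in>{0..1}. \<forall>t'\<in>{0..1}.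
     mask \<mu> t = mask \<mu> t' \<longrightarrow> (\<forall>x\<in>\<Omega>. \<Lambda> (mask \<mu> t) x t = \<Lambda> (mask \<mu> t') x t'))"

definition reduced :: "(('a::euclidean_space \<times> real) measure \<Rightarrow> 'a \<Rightarrow> real \<Rightarrow> 'b) \<Rightarrow>
    ('a \<times> real) measure \<Rightarrow> 'a \<Rightarrow> 'b" where
  "reduced \<Lambda> \<nu> x = \<Lambda> \<nu> x (e_end (tmarg \<nu>))"

text \<open>Weak-star (narrow) topology on P(\<Omega>~): initial topology of the maps
  \<mu> \<mapsto> \<integral> f d\<mu>, f bounded continuous.\<close>
definition weak_star :: "'a::euclidean_space set \<Rightarrow> ('a \<times> real) measure topology" where
  "weak_star \<Omega> = pullback_topology (Pm \<Omega>)
     (\<lambda>\<mu> f. if continuous_on UNIV f \<and> bounded (range f) then integral\<^sup>L \<mu> f else 0)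
     (product_topology (\<lambda>_. euclideanreal) UNIV)"

definition Xset :: "real \<Rightarrow> real \<Rightarrow> 'a::euclidean_space set \<Rightarrow> (('a \<times> real) measure \<times> 'a) set" where
  "Xset C \<sigma> \<Omega> = {(mask \<mu> t, x) | \<mu> x t. \<mu> \<in> Lip C \<sigma> \<Omega> \<and> x \<in> \<Omega> \<and> t \<in> {0..1}}"

end

theory Submission
  imports Defs
begin

lemma snd_meas: "sets \<mu> = sets borel \<Longrightarrow> snd \<in> borel_measurable (\<mu> :: ('a::euclidean_space \<times> real) measure)"
  by (simp cong: measurable_cong_sets) (intro borel_measurable_continuous_onI continuous_intros)

lemma sets_UNIV_Times:
  fixes \<mu> :: "('a::euclidean_space \<times> real) measure"
  assumes S: "sets \<mu> = sets borel" and B: "B \<in> sets borel"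
  shows "UNIV \<times> B \<in> sets \<mu>"
proof -
  have sp: "space \<mu> = UNIV" using sets_eq_imp_space_eq[OF S] by simp
  have "snd -` B \<inter> space \<mu> = UNIV \<times> B" unfolding sp by auto
  then show ?thesis using measurable_sets[OF snd_meas[OF S] B] by simp
qed

lemma mask_facts:
  fixes \<mu> :: "('a::euclidean_space \<times> real) measure"
  assumes P: "prob_space \<mu>" and S: "sets \<mu> = sets borel" and t: "0 \<le> t"
    and z: "0 < measure \<mu> (UNIV \<times> {0})"
  defines "c \<equiv> measure \<mu> (UNIV \<times> {0..t})"
  shows "measure \<mu> (UNIV \<times> {0}) \<le> c" "c \<le> 1"
    "emeasure \<mu> (UNIV \<times> {0..t}) = ennreal c"
    "mask \<mu> t = density \<mu> (\<lambda>z. indicator {0..t} (snd z) / ennreal c)"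
    "tmarg (mask \<mu> t) = density (tmarg \<mu>) (\<lambda>s. indicator {0..t} s / ennreal c)"
proof -
  interpret prob_space \<mu> by fact
  have sp: "space \<mu> = UNIV" using sets_eq_imp_space_eq[OF S] by simp
  have m1: "UNIV \<times> {0..t} \<in> sets \<mu>" "UNIV \<times> {0::real} \<in> sets \<mu>" unfolding S by (auto intro!: borel_closed closed_Times)
  show "measure \<mu> (UNIV \<times> {0}) \<le> c" unfolding c_def
    using t by (intro finite_measure_mono m1) auto
  show "c \<le> 1" unfolding c_def by simp
  show e: "emeasure \<mu> (UNIV \<times> {0..t}) = ennreal c" unfolding c_def
    by (simp add: emeasure_eq_measure)
  have ind: "\<And>z. indicator (UNIV \<times> {0..t}) z = (indicator {0..t} (snd z) :: ennreal)"
    by (auto simp: indicator_def)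
  show m: "mask \<mu> t = density \<mu> (\<lambda>z. indicator {0..t} (snd z) / ennreal c)"
    unfolding mask_def e ind ..
  have sm: "snd \<in> measurable \<mu> borel" using S by (rule snd_meas)
  show "tmarg (mask \<mu> t) = density (tmarg \<mu>) (\<lambda>s. indicator {0..t} s / ennreal c)"
    unfolding m tmarg_def
    by (subst density_distr[OF _ sm]) auto
qed

lemma tmarg_emeasure:
  fixes \<mu> :: "('a::euclidean_space \<times> real) measure"
  assumes S: "sets \<mu> = sets borel" and B: "B \<in> sets borel"
  shows "emeasure (tmarg \<mu>) B = emeasure \<mu> (UNIV \<times> B)"
proof -
  have sp: "space \<mu> = UNIV" using sets_eq_imp_space_eq[OF S] by simp
  have "snd -` B \<inter> space \<mu> = UNIV \<times> B" unfolding sp by auto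
  then show ?thesis unfolding tmarg_def
    by (subst emeasure_distr[OF snd_meas[OF S] B]) simp
qed

lemma msupp_compl_null:
  fixes \<nu> :: "real measure"
  assumes sets: "sets \<nu> = sets borel"
  shows "UNIV - msupp \<nu> \<in> null_sets \<nu>"
proof -
  define F where "F = {ball s e | s e. e > 0 \<and> emeasure \<nu> (ball s e) = 0}"
  have Fo: "\<And>S. S \<in> F \<Longrightarrow> open S" by (auto simp: F_def)
  obtain F' where F': "F' \<subseteq> F" "countable F'" "\<Union>F' = \<Union>F"
    using Lindelof[OF Fo] by blast
  have U: "UNIV - msupp \<nu> = \<Union>F"
  proof (intro equalityI subsetI)
    fix s assume "s \<in> UNIV - msupp \<nu>"
    then obtain e where "e > 0" "\<not> emeasure \<nu> (ball s e) > 0" by (auto simp: msupp_def)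
    then have "ball s e \<in> F" by (auto simp: F_def)
    then show "s \<in> \<Union>F" using \<open>e > 0\<close> by (metis UnionI centre_in_ball)
  next
    fix s assume "s \<in> \<Union>F"
    then obtain s0 e where se: "s \<in> ball s0 e" "e > 0" "emeasure \<nu> (ball s0 e) = 0" by (auto simp: F_def)
    define d where "d = e - dist s0 s"
    have "d > 0" using se by (auto simp: d_def dist_commute)
    have "ball s d \<subseteq> ball s0 e" unfolding d_def
      by (smt (verit, ccfv_SIG) dist_triangle mem_ball subsetI)
    then have "emeasure \<nu> (ball s d) \<le> emeasure \<nu> (ball s0 e)"
      by (intro emeasure_mono) (auto simp: sets)
    then have "emeasure \<nu> (ball s d) = 0" using se by simp
    then show "s \<in> UNIV - msupp \<nu>" using \<open>d > 0\<close> by (auto simp: msupp_def intro!: exI[of _ d])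
  qed
  have "(\<Union>B\<in>F'. B) \<in> null_sets \<nu>"
  proof (rule null_sets_UN')
    show "countable F'" by fact
    fix B assume "B \<in> F'"
    then have "B \<in> F" using F' by blast
    then show "B \<in> null_sets \<nu>" by (auto simp: F_def null_sets_def sets)
  qed
  then show ?thesis using U F' by simp
qed

lemma mask_end:
  fixes \<mu> :: "('a::euclidean_space \<times> real) measure"
  assumes P: "prob_space \<mu>" and S: "sets \<mu> = sets borel" and t: "0 \<le> t"
    and z: "0 < measure \<mu> (UNIV \<times> {0})"
  defines "t' \<equiv> e_end (tmarg (mask \<mu> t))"
  shows "0 \<le> t'" "t' \<le> t" "mask \<mu> t' = mask \<mu> t"
proof -
  interpret prob_space \<mu> by fact
  define c where "c = measure \<mu> (UNIV \<times> {0..t})"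
  note F = mask_facts[OF P S t z, folded c_def]
  have cpos: "c > 0" using F(1) z by simp
  define h where "h = (\<lambda>s::real. indicator {0..t} s / ennreal c)"
  define \<nu> where "\<nu> = tmarg \<mu>"
  have sn: "sets \<nu> = sets borel" by (simp add: \<nu>_def tmarg_def)
  have hm: "h \<in> borel_measurable \<nu>" unfolding sn[THEN measurable_cong_sets, OF refl] h_def
    by measurable
  have nu': "tmarg (mask \<mu> t) = density \<nu> h" using F(5) by (simp add: h_def \<nu>_def)
  have em: "emeasure (density \<nu> h) B = inverse (ennreal c) * emeasure \<nu> (B \<inter> {0..t})"
    if B: "B \<in> sets borel" for B
  proof -
    have "emeasure (density \<nu> h) B = (\<integral>\<^sup>+ s. h s * indicator B s \<partial>\<nu>)"
      using B by (intro emeasure_density hm) (simp add: sn)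
    also have "\<dots> = (\<integral>\<^sup>+ s. inverse (ennreal c) * indicator (B \<inter> {0..t}) s \<partial>\<nu>)"
      by (intro nn_integral_cong) (auto simp: h_def indicator_def divide_ennreal_def)
    also have "\<dots> = inverse (ennreal c) * emeasure \<nu> (B \<inter> {0..t})"
      using B by (intro nn_integral_cmult_indicator) (auto simp: sn)
    finally show ?thesis .
  qed
  have ic: "inverse (ennreal c) \<noteq> 0" by simp
  have nu0: "emeasure \<nu> {0} > 0"
    using z tmarg_emeasure[OF S, of "{0}"] by (simp add: \<nu>_def emeasure_eq_measure)
  have zero_in: "0 \<in> msupp (tmarg (mask \<mu> t))"
    unfolding msupp_def nu' mem_Collect_eq
  proof (intro allI impI)
    fix e :: real assume "e > 0"
    have "emeasure \<nu> {0} \<le> emeasure \<nu> (ball 0 e \<inter> {0..t})"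
      using \<open>e > 0\<close> t by (intro emeasure_mono) (auto simp: sn)
    then have "emeasure \<nu> (ball 0 e \<inter> {0..t}) > 0" using nu0 by simp
    then show "emeasure (density \<nu> h) (ball 0 e) > 0"
      using em[of "ball 0 e"] ic by (simp add: ennreal_zero_less_mult_iff zero_less_iff_neq_zero)
  qed
  have upper: "msupp (tmarg (mask \<mu> t)) \<subseteq> {..t}"
  proof
    fix s assume s: "s \<in> msupp (tmarg (mask \<mu> t))"
    show "s \<in> {..t}"
    proof (rule ccontr)
      assume "s \<notin> {..t}"
      then have "s - t > 0" by simp
      with s have "emeasure (density \<nu> h) (ball s (s - t)) > 0" by (auto simp: msupp_def nu')
      moreover have "ball s (s - t) \<inter> {0..t} = {}" by (auto simp: dist_real_def)
      ultimately show False using em[of "ball s (s - t)"] by simp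
    qed
  qed
  have bdd: "bdd_above (msupp (tmarg (mask \<mu> t)))" using upper by (auto simp: bdd_above_def)
  show "0 \<le> t'" unfolding t'_def e_end_def using zero_in bdd by (rule cSup_upper)
  show tt: "t' \<le> t" unfolding t'_def e_end_def using zero_in upper by (intro cSup_least) auto
  have "msupp (tmarg (mask \<mu> t)) \<subseteq> {..t'}" unfolding t'_def e_end_def using bdd
    by (auto intro: cSup_upper)
  then have sub: "{t'<..} \<subseteq> UNIV - msupp (density \<nu> h)" using nu' by auto
  have nn: "UNIV - msupp (density \<nu> h) \<in> null_sets (density \<nu> h)"
    by (rule msupp_compl_null) (simp add: sn)
  have "{t'<..} \<in> null_sets (density \<nu> h)"
    by (rule null_sets_subset[OF nn _ sub]) (simp add: sn)
  then have "emeasure (density \<nu> h) {t'<..} = 0" by auto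
  then have "emeasure \<nu> ({t'<..} \<inter> {0..t}) = 0" using em[of "{t'<..}"] ic by simp
  moreover have "{t'<..} \<inter> {0..t} = {t'<..t}" using \<open>0 \<le> t'\<close> by auto
  ultimately have N0: "emeasure \<mu> (UNIV \<times> {t'<..t}) = 0"
    using tmarg_emeasure[OF S, of "{t'<..t}"] by (simp add: \<nu>_def)
  have Nn: "UNIV \<times> {t'<..t} \<in> null_sets \<mu>" using N0 by (intro null_setsI) (auto intro!: sets_UNIV_Times[OF S])
  have ae: "AE z in \<mu>. (z \<in> UNIV \<times> {0..t'}) = (z \<in> UNIV \<times> {0..t})"
    by (rule AE_I'[OF Nn]) (use tt in auto)
  have ceq: "emeasure \<mu> (UNIV \<times> {0..t'}) = emeasure \<mu> (UNIV \<times> {0..t})"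
    using ae by (rule emeasure_eq_AE) (auto intro!: sets_UNIV_Times[OF S])
  have "mask \<mu> t' = density \<mu> (\<lambda>z. indicator (UNIV \<times> {0..t'}) z / emeasure \<mu> (UNIV \<times> {0..t}))"
    unfolding mask_def ceq ..
  also have "\<dots> = mask \<mu> t" unfolding mask_def
  proof (rule density_cong)
    have ms: "\<And>T. (UNIV \<times> {0..T::real}) \<in> sets \<mu>" by (auto intro!: sets_UNIV_Times[OF S])
    show "(\<lambda>z. indicator (UNIV \<times> {0..t'}) z / emeasure \<mu> (UNIV \<times> {0..t})) \<in> borel_measurable \<mu>"
      using ms by measurable
    show "(\<lambda>z. indicator (UNIV \<times> {0..t}) z / emeasure \<mu> (UNIV \<times> {0..t})) \<in> borel_measurable \<mu>"
      using ms by measurable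
    show "AE z in \<mu>. indicator (UNIV \<times> {0..t'}) z / emeasure \<mu> (UNIV \<times> {0..t}) =
       indicator (UNIV \<times> {0..t}) z / emeasure \<mu> (UNIV \<times> {0..t})"
      using ae by eventually_elim (simp only: indicator_def)
  qed
  finally show "mask \<mu> t' = mask \<mu> t" .
qed


lemma Lip_basic:
  fixes \<mu> :: "('a::euclidean_space \<times> real) measure"
  assumes "\<mu> \<in> Lip C \<sigma> \<Omega>"
  shows "prob_space \<mu>" "sets \<mu> = sets borel" "emeasure \<mu> (\<Omega> \<times> {0..1}) = 1"
    "\<sigma> \<le> measure \<mu> (UNIV \<times> {0})"
proof -
  show P: "prob_space \<mu>" and S: "sets \<mu> = sets borel" and "emeasure \<mu> (\<Omega> \<times> {0..1}) = 1"
    using assms by (auto simp: Lip_def Pm_def)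
  have "measure (tmarg \<mu>) {0} = measure \<mu> (UNIV \<times> {0})"
    unfolding measure_def using tmarg_emeasure[OF S, of "{0}"] by simp
  then show "\<sigma> \<le> measure \<mu> (UNIV \<times> {0})" using assms by (auto simp: Lip_def)
qed

lemma section_meas:
  fixes K :: "real \<Rightarrow> 'a::euclidean_space measure"
  assumes K: "K \<in> measurable borel (subprob_algebra borel)"
    and A: "A \<in> sets (borel :: ('a \<times> real) measure)"
  shows "(\<lambda>s. emeasure (K s) {x. (x, s) \<in> A}) \<in> borel_measurable borel"
proof (rule emeasure_measurable_subprob_algebra2[OF _ K])
  define sw where "sw = (\<lambda>p::real \<times> 'a. (snd p, fst p))"
  have swm: "sw \<in> measurable borel borel" unfolding sw_def
    by (intro borel_measurable_continuous_onI continuous_intros)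
  have "sw -` A \<inter> space borel \<in> sets borel" by (rule measurable_sets[OF swm A])
  moreover have "(SIGMA s:space borel. {x. (x, s) \<in> A}) = sw -` A \<inter> space borel"
    by (auto simp: sw_def)
  ultimately show "(SIGMA s:space borel. {x. (x, s) \<in> A}) \<in> sets (borel \<Otimes>\<^sub>M borel)"
    unfolding borel_prod by simp
qed

lemma mask_in_Lip:
  fixes \<mu> :: "('a::euclidean_space \<times> real) measure"
  assumes L: "\<mu> \<in> Lip C \<sigma> \<Omega>" and sg: "0 < \<sigma>" and cO: "compact \<Omega>" and t: "t \<in> {0..1}"
  shows "mask \<mu> t \<in> Lip C \<sigma> \<Omega>"
proof -
  note B = Lip_basic[OF L]
  interpret prob_space \<mu> by (rule B(1))
  have S: "sets \<mu> = sets borel" by (rule B(2))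
  have sp: "space \<mu> = UNIV" using sets_eq_imp_space_eq[OF S] by simp
  have z: "0 < measure \<mu> (UNIV \<times> {0})" using B(4) sg by simp
  have t0: "0 \<le> t" using t by simp
  define c where "c = measure \<mu> (UNIV \<times> {0..t})"
  note F = mask_facts[OF B(1) S t0 z, folded c_def]
  have cpos: "c > 0" using F(1) z by simp
  define h where "h = (\<lambda>s::real. indicator {0..t} s / ennreal c)"
  define \<nu> where "\<nu> = tmarg \<mu>"
  have sn: "sets \<nu> = sets borel" by (simp add: \<nu>_def tmarg_def)
  have hm: "h \<in> borel_measurable \<nu>" unfolding sn[THEN measurable_cong_sets, OF refl] h_def
    by measurable
  have hm2: "(\<lambda>z. h (snd z)) \<in> borel_measurable \<mu>"
    using measurable_compose[OF snd_meas[OF S], of h borel] hm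
    unfolding sn[THEN measurable_cong_sets, OF refl] by simp
  have M': "mask \<mu> t = density \<mu> (\<lambda>z. h (snd z))" using F(4) by (simp add: h_def)
  have nu': "tmarg (mask \<mu> t) = density \<nu> h" using F(5) by (simp add: h_def \<nu>_def)
  have icr: "inverse (ennreal c) = ennreal (inverse c)" using cpos by (rule inverse_ennreal)
  have emM: "emeasure (mask \<mu> t) A = inverse (ennreal c) * emeasure \<mu> (A \<inter> (UNIV \<times> {0..t}))"
    if A: "A \<in> sets borel" for A
  proof -
    have "emeasure (mask \<mu> t) A = (\<integral>\<^sup>+ z. h (snd z) * indicator A z \<partial>\<mu>)"
      unfolding M' using A by (intro emeasure_density hm2) (simp add: S)
    also have "\<dots> = (\<integral>\<^sup>+ z. inverse (ennreal c) * indicator (A \<inter> (UNIV \<times> {0..t})) z \<partial>\<mu>)"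
      by (intro nn_integral_cong) (auto simp: h_def indicator_def divide_ennreal_def)
    also have "\<dots> = inverse (ennreal c) * emeasure \<mu> (A \<inter> (UNIV \<times> {0..t}))"
      using A sets_UNIV_Times[OF S, of "{0..t}"]
      by (intro nn_integral_cmult_indicator) (auto simp: S)
    finally show ?thesis .
  qed
  have em: "emeasure (density \<nu> h) B = inverse (ennreal c) * emeasure \<nu> (B \<inter> {0..t})"
    if B: "B \<in> sets borel" for B
  proof -
    have "emeasure (density \<nu> h) B = (\<integral>\<^sup>+ s. h s * indicator B s \<partial>\<nu>)"
      using B by (intro emeasure_density hm) (simp add: sn)
    also have "\<dots> = (\<integral>\<^sup>+ s. inverse (ennreal c) * indicator (B \<inter> {0..t}) s \<partial>\<nu>)"
      by (intro nn_integral_cong) (auto simp: h_def indicator_def divide_ennreal_def)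
    also have "\<dots> = inverse (ennreal c) * emeasure \<nu> (B \<inter> {0..t})"
      using B by (intro nn_integral_cmult_indicator) (auto simp: sn)
    finally show ?thesis .
  qed
  have ic1: "inverse (ennreal c) * ennreal c = 1"
    unfolding icr using cpos by (simp add: ennreal_mult''[symmetric])
  have Ob: "\<Omega> \<times> {0..1} \<in> sets \<mu>" unfolding S
    using cO by (intro borel_closed closed_Times compact_imp_closed) auto
  have AEO: "AE z in \<mu>. z \<in> \<Omega> \<times> {0..1}"
    using AE_in_set_eq_1[OF Ob] B(3) by (simp add: emeasure_eq_measure)
  have "prob_space (mask \<mu> t)"
  proof (rule prob_spaceI)
    have "space (mask \<mu> t) = UNIV" unfolding M' by (simp add: sp)
    then show "emeasure (mask \<mu> t) (space (mask \<mu> t)) = 1"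
      using emM[of UNIV] F(3) ic1 by simp
  qed
  moreover have sM: "sets (mask \<mu> t) = sets borel" unfolding M' by (simp add: S)
  moreover have "emeasure (mask \<mu> t) (\<Omega> \<times> {0..1}) = 1"
  proof -
    have "emeasure \<mu> ((\<Omega> \<times> {0..1}) \<inter> (UNIV \<times> {0..t})) = emeasure \<mu> (UNIV \<times> {0..t})"
      using AEO t by (intro emeasure_eq_AE) (auto intro!: sets_UNIV_Times[OF S] Ob)
    then show ?thesis using emM[of "\<Omega> \<times> {0..1}"] Ob F(3) ic1 by (simp add: S)
  qed
  moreover have "measure (tmarg (mask \<mu> t)) {0} \<ge> \<sigma>"
  proof -
    define m0 where "m0 = measure \<mu> (UNIV \<times> {0})"
    have "emeasure \<nu> {0} = ennreal m0"
      using tmarg_emeasure[OF S, of "{0}"] by (simp add: \<nu>_def m0_def emeasure_eq_measure)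
    then have "emeasure (tmarg (mask \<mu> t)) {0} = ennreal (inverse c * m0)"
      unfolding nu' using em[of "{0}"] t icr cpos
      by (simp add: ennreal_mult[symmetric] m0_def)
    then have "measure (tmarg (mask \<mu> t)) {0} = inverse c * m0"
      unfolding measure_def using cpos by (simp add: m0_def)
    moreover have "m0 \<le> inverse c * m0"
    proof -
      have "m0 * 1 \<le> m0 * inverse c" using F(2) cpos
        by (intro mult_left_mono) (auto simp: m0_def one_le_inverse)
      then show ?thesis by (simp add: mult.commute)
    qed
    ultimately show ?thesis using B(4) by (simp add: m0_def)
  qed
  moreover obtain K :: "real \<Rightarrow> 'a measure" where
    K: "K \<in> measurable borel (subprob_algebra borel)"
      "\<forall>s. prob_space (K s) \<and> sets (K s) = sets borel \<and> emeasure (K s) \<Omega> = 1"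
      "\<forall>A \<in> sets (borel :: ('a \<times> real) measure).
           emeasure \<mu> A = (\<integral>\<^sup>+ s. emeasure (K s) {x. (x, s) \<in> A} \<partial>tmarg \<mu>)"
      "\<forall>s\<in>{0..1}. \<forall>t\<in>{0..1}. W2 (K s) (K t) \<le> C * \<bar>s - t\<bar>"
    using L unfolding Lip_def by blast
  moreover have "\<forall>A \<in> sets (borel :: ('a \<times> real) measure).
      emeasure (mask \<mu> t) A = (\<integral>\<^sup>+ s. emeasure (K s) {x. (x, s) \<in> A} \<partial>tmarg (mask \<mu> t))"
  proof
    fix A :: "('a \<times> real) set" assume A: "A \<in> sets borel"
    have At: "A \<inter> (UNIV \<times> {0..t}) \<in> sets borel"
      using A sets_UNIV_Times[OF S, of "{0..t}"] by (auto simp: S)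
    have gm: "(\<lambda>s. emeasure (K s) {x. (x, s) \<in> A'}) \<in> borel_measurable \<nu>"
      if "A' \<in> sets borel" for A'
      unfolding sn[THEN measurable_cong_sets, OF refl] by (rule section_meas[OF K(1) that])
    have "(\<integral>\<^sup>+ s. emeasure (K s) {x. (x, s) \<in> A} \<partial>tmarg (mask \<mu> t))
        = (\<integral>\<^sup>+ s. h s * emeasure (K s) {x. (x, s) \<in> A} \<partial>\<nu>)"
      unfolding nu' by (rule nn_integral_density[OF hm gm[OF A]])
    also have "\<dots> = (\<integral>\<^sup>+ s. inverse (ennreal c) * emeasure (K s) {x. (x, s) \<in> A \<inter> (UNIV \<times> {0..t})} \<partial>\<nu>)"
      by (intro nn_integral_cong) (auto simp: h_def indicator_def divide_ennreal_def)
    also have "\<dots> = inverse (ennreal c) * (\<integral>\<^sup>+ s. emeasure (K s) {x. (x, s) \<in> A \<inter> (UNIV \<times> {0..t})} \<partial>\<nu>)"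
      by (rule nn_integral_cmult[OF gm[OF At]])
    also have "\<dots> = inverse (ennreal c) * emeasure \<mu> (A \<inter> (UNIV \<times> {0..t}))"
      using K(3) At by (simp add: \<nu>_def)
    also have "\<dots> = emeasure (mask \<mu> t) A" using emM[OF A] by simp
    finally show "emeasure (mask \<mu> t) A = (\<integral>\<^sup>+ s. emeasure (K s) {x. (x, s) \<in> A} \<partial>tmarg (mask \<mu> t))" by simp
  qed
  ultimately show ?thesis unfolding Lip_def Pm_def by blast
qed


lemma mask_one:
  fixes \<mu> :: "('a::euclidean_space \<times> real) measure"
  assumes L: "\<mu> \<in> Lip C \<sigma> \<Omega>" and cO: "compact \<Omega>"
  shows "mask \<mu> 1 = \<mu>"
proof -
  note B = Lip_basic[OF L]
  interpret prob_space \<mu> by (rule B(1))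
  have S: "sets \<mu> = sets borel" by (rule B(2))
  have Ob: "\<Omega> \<times> {0..1} \<in> sets \<mu>" unfolding S
    using cO by (intro borel_closed closed_Times compact_imp_closed) auto
  have AEO: "AE z in \<mu>. z \<in> \<Omega> \<times> {0..1}"
    using AE_in_set_eq_1[OF Ob] B(3) by (simp add: emeasure_eq_measure)
  have U: "UNIV \<times> {0..1::real} \<in> sets \<mu>" by (rule sets_UNIV_Times[OF S]) simp
  have "emeasure \<mu> (UNIV \<times> {0..1}) = emeasure \<mu> (space \<mu>)"
    using AEO U by (intro emeasure_eq_AE) auto
  then have e1: "emeasure \<mu> (UNIV \<times> {0..1}) = 1" by (simp add: emeasure_space_1)
  have "mask \<mu> 1 = density \<mu> (\<lambda>_. 1)" unfolding mask_def e1
  proof (rule density_cong)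
    show "(\<lambda>z. indicator (UNIV \<times> {0..1::real}) z / (1::ennreal)) \<in> borel_measurable \<mu>"
      using U by measurable
    show "AE z in \<mu>. indicator (UNIV \<times> {0..1::real}) z / (1::ennreal) = 1"
      using AEO by eventually_elim auto
  qed simp
  then show ?thesis by (simp add: density_1)
qed

theorem lemma4p7:
  fixes \<Omega> :: "'a::euclidean_space set" and C \<sigma> :: real
    and \<Lambda> :: "('a \<times> real) measure \<Rightarrow> 'a \<Rightarrow> real \<Rightarrow> 'b::euclidean_space"
  assumes "compact \<Omega>" and "C > 0" and "0 < \<sigma>" and "\<sigma> < 1"
    and "causal C \<sigma> \<Omega> \<Lambda>" and "identifiable C \<sigma> \<Omega> \<Lambda>"
  shows "(\<forall>\<mu>\<in>Lip C \<sigma> \<Omega>. \<forall>x\<in>\<Omega>. \<forall>t\<in>{0..1}. \<Lambda> \<mu> x t = reduced \<Lambda> (mask \<mu> t) x)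
    \<and> (continuous_map
          (subtopology (prod_topology (weak_star \<Omega>) euclidean) (Lip C \<sigma> \<Omega> \<times> (\<Omega> \<times> {0..1})))
          euclidean (\<lambda>(\<mu>, (x, t)). \<Lambda> \<mu> x t)
       \<longrightarrow> continuous_map
          (subtopology (prod_topology (weak_star \<Omega>) euclidean) (Xset C \<sigma> \<Omega>))
          euclidean (\<lambda>(\<nu>, x). reduced \<Lambda> \<nu> x))"
proof
  show I: "\<forall>\<mu>\<in>Lip C \<sigma> \<Omega>. \<forall>x\<in>\<Omega>. \<forall>t\<in>{0..1}. \<Lambda> \<mu> x t = reduced \<Lambda> (mask \<mu> t) x"
  proof (intro ballI)
    fix \<mu> x t assume L: "\<mu> \<in> Lip C \<sigma> \<Omega>" and x: "x \<in> \<Omega>" and t: "t \<in> {0..(1::real)}"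
    note B = Lip_basic[OF L]
    have z: "0 < measure \<mu> (UNIV \<times> {0})" using B(4) assms(3) by simp
    define t' where "t' = e_end (tmarg (mask \<mu> t))"
    have t0: "0 \<le> t" using t by simp
    note E = mask_end[OF B(1) B(2) t0 z, folded t'_def]
    have t'1: "t' \<in> {0..1}" using E(1,2) t by simp
    have "\<Lambda> \<mu> x t = \<Lambda> (mask \<mu> t) x t" using assms(5) L x t by (simp add: causal_def)
    also have "\<dots> = \<Lambda> (mask \<mu> t') x t'"
      using assms(6) L x t t'1 E(3) unfolding identifiable_def by metis
    also have "\<dots> = reduced \<Lambda> (mask \<mu> t) x" using E(3) by (simp add: reduced_def t'_def)
    finally show "\<Lambda> \<mu> x t = reduced \<Lambda> (mask \<mu> t) x" .
  qed
  show "continuous_map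
          (subtopology (prod_topology (weak_star \<Omega>) euclidean) (Lip C \<sigma> \<Omega> \<times> (\<Omega> \<times> {0..1})))
          euclidean (\<lambda>(\<mu>, (x, t)). \<Lambda> \<mu> x t)
       \<longrightarrow> continuous_map
          (subtopology (prod_topology (weak_star \<Omega>) euclidean) (Xset C \<sigma> \<Omega>))
          euclidean (\<lambda>(\<nu>, x). reduced \<Lambda> \<nu> x)"
  proof
    assume cont: "continuous_map
          (subtopology (prod_topology (weak_star \<Omega>) euclidean) (Lip C \<sigma> \<Omega> \<times> (\<Omega> \<times> {0..1})))
          euclidean (\<lambda>(\<mu>, (x, t)). \<Lambda> \<mu> x t)"
    define g where "g = (\<lambda>p::('a \<times> real) measure \<times> 'a. (fst p, (snd p, 1::real)))"
    have XL: "\<And>\<nu> x. (\<nu>, x) \<in> Xset C \<sigma> \<Omega> \<Longrightarrow> \<nu> \<in> Lip C \<sigma> \<Omega> \<and> x \<in> \<Omega>"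
      unfolding Xset_def using mask_in_Lip[OF _ assms(3,1)] by blast
    have gc: "continuous_map (subtopology (prod_topology (weak_star \<Omega>) euclidean) (Xset C \<sigma> \<Omega>))
       (subtopology (prod_topology (weak_star \<Omega>) euclidean) (Lip C \<sigma> \<Omega> \<times> (\<Omega> \<times> {0..1}))) g"
      unfolding continuous_map_in_subtopology
    proof
      show "continuous_map (subtopology (prod_topology (weak_star \<Omega>) euclidean) (Xset C \<sigma> \<Omega>))
          (prod_topology (weak_star \<Omega>) euclidean) g"
      proof -
        have "continuous_map (prod_topology (weak_star \<Omega>) euclidean) (prod_topology euclidean euclidean)
           (\<lambda>x::('a \<times> real) measure \<times> 'a. (snd x, 1::real))"
          by (intro continuous_map_pairedI continuous_map_snd continuous_map_const[THEN iffD2]) auto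
        then have "continuous_map (prod_topology (weak_star \<Omega>) euclidean) euclidean
           (\<lambda>x::('a \<times> real) measure \<times> 'a. (snd x, 1::real))" by simp
        then show ?thesis unfolding g_def
          by (intro continuous_map_pairedI continuous_map_from_subtopology continuous_map_fst)
      qed
      show "g \<in> topspace (subtopology (prod_topology (weak_star \<Omega>) euclidean) (Xset C \<sigma> \<Omega>))
          \<rightarrow> Lip C \<sigma> \<Omega> \<times> (\<Omega> \<times> {0..1})"
        using XL by (auto simp: g_def)
    qed
    have c2: "continuous_map (subtopology (prod_topology (weak_star \<Omega>) euclidean) (Xset C \<sigma> \<Omega>))
        euclidean ((\<lambda>(\<mu>, (x, t)). \<Lambda> \<mu> x t) \<circ> g)"
      by (rule continuous_map_compose[OF gc cont])
    show "continuous_map (subtopology (prod_topology (weak_star \<Omega>) euclidean) (Xset C \<sigma> \<Omega>))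
          euclidean (\<lambda>(\<nu>, x). reduced \<Lambda> \<nu> x)"
    proof (rule continuous_map_eq[OF c2])
      fix p assume "p \<in> topspace (subtopology (prod_topology (weak_star \<Omega>) euclidean) (Xset C \<sigma> \<Omega>))"
      then obtain \<nu> x where p: "p = (\<nu>, x)" "(\<nu>, x) \<in> Xset C \<sigma> \<Omega>" by (cases p) auto
      then have L: "\<nu> \<in> Lip C \<sigma> \<Omega>" and x: "x \<in> \<Omega>" using XL by auto
      have "\<Lambda> \<nu> x 1 = reduced \<Lambda> (mask \<nu> 1) x" using I L x by simp
      also have "\<dots> = reduced \<Lambda> \<nu> x" using mask_one[OF L assms(1)] by simp
      finally show "((\<lambda>(\<mu>, (x, t)). \<Lambda> \<mu> x t) \<circ> g) p = (\<lambda>(\<nu>, x). reduced \<Lambda> \<nu> x) p"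
        using p by (simp add: g_def)
    qed
  qed
qed

end
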